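(* Let $\lambda$ and $\mu$ be infinite cardinals with $\mu\leq 2^\lambda$. Then $\mu\not\to_{hc}(\mu)^2_\lambda$: there is a coloring $c:[\mu]^2\to\lambda$ such that for no $\xi<\lambda$ and no $X\subseteq\mu$ with $|X|=\mu$ is the graph $(X,c^{-1}(\xi)\cap[X]^2)$ highly connected.
   Context: $[S]^2$ denotes the set of $2$-element subsets of $S$. A graph $G=(V,E)$ is highly connected if for every $D\subseteq V$ with $|D|<|V|$ the graph induced on $V\setminus D$ is connected. For cardinals $\nu,\mu,\lambda$, $\nu\to_{hc}(\mu)^2_\lambda$ means: for every $c:[\nu]^2\to\lambda$ there exist $\xi<\lambda$ and $X\subseteq\nu$ with $|X|=\mu$ such that $(X,c^{-1}(\xi)\cap[X]^2)$ is highly connected; $\not\to_{hc}$ is its negation. *)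

theory Defs
  imports Main
begin

text \<open>Cardinals are represented by sets: a cardinal is the cardinality |S| of a set S
  (the library's card_of, with orders \<le>o, <o, =o).\<close>

definition two_subsets :: "'a set \<Rightarrow> 'a set set" where
  "two_subsets S = {e. e \<subseteq> S \<and> card e = 2}"

definition graph_connected :: "'a set \<Rightarrow> 'a set set \<Rightarrow> bool" where
  "graph_connected V E \<longleftrightarrow>
     (\<forall>x\<in>V. \<forall>y\<in>V. (\<lambda>u v. u \<in> V \<and> v \<in> V \<and> {u, v} \<in> E)\<^sup>*\<^sup>* x y)"

definition highly_connected :: "'a set \<Rightarrow> 'a set set \<Rightarrow> bool" where
  "highly_connected V E \<longleftrightarrow>
     (\<forall>D. D \<subseteq> V \<and> (card_of D, card_of V) \<in> ordLess \<longrightarrow>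
        graph_connected (V - D) {e \<in> E. e \<subseteq> V - D})"

text \<open>hc_arrow N M L  means  |N| \<rightarrow>_hc (|M|)^2_|L|.\<close>
definition hc_arrow :: "'a set \<Rightarrow> 'c set \<Rightarrow> 'b set \<Rightarrow> bool" where
  "hc_arrow N M L \<longleftrightarrow>
     (\<forall>c :: 'a set \<Rightarrow> 'b. (\<forall>e\<in>two_subsets N. c e \<in> L) \<longrightarrow>
        (\<exists>\<xi>\<in>L. \<exists>X. X \<subseteq> N \<and> (card_of X, card_of M) \<in> ordIso \<and>
           highly_connected X {e \<in> two_subsets X. c e = \<xi>}))"

end

theory Submission
  imports Defs
begin

lemma two_elems: assumes "infinite A" obtains a b where "a \<in> A" "b \<in> A" "a \<noteq> b"
proof -
  obtain a where a: "a \<in> A" using assms infinite_imp_nonempty by blast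
  have "infinite (A - {a})" using assms by simp
  then obtain b where "b \<in> A - {a}" using infinite_imp_nonempty by blast
  thus ?thesis using a that by blast
qed

lemma fin_less_inf: "finite A \<Longrightarrow> infinite B \<Longrightarrow> (card_of A, card_of B) \<in> ordLess"
  using finite_ordLess_infinite[OF card_of_Well_order card_of_Well_order] by (simp add: Field_card_of)

theorem mainTheorem4:
  fixes M :: "'a set" and L :: "'b set"
  assumes "infinite L" and "infinite M" and "(card_of M, card_of (Pow L)) \<in> ordLeq"
  shows "\<not> hc_arrow M M L"
proof
  assume H: "hc_arrow M M L"
  obtain f where f: "inj_on f M" "f ` M \<subseteq> Pow L"
    using assms(3) card_of_ordLeq[of M "Pow L"] by auto
  obtain a0 b0 where ab: "a0 \<in> L" "b0 \<in> L" "a0 \<noteq> b0"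
    using assms(1) by (rule two_elems)
  have "(card_of (UNIV::bool set), card_of L) \<in> ordLeq"
    unfolding card_of_ordLeq[symmetric]
    by (rule exI[of _ "\<lambda>t. if t then a0 else b0"]) (use ab in \<open>auto simp: inj_on_def\<close>)
  hence "(card_of (L \<times> (UNIV::bool set)), card_of L) \<in> ordIso"
    using card_of_Times_infinite_simps(1)[OF assms(1), of "UNIV::bool set"] by simp
  hence "(card_of (L \<times> (UNIV::bool set)), card_of L) \<in> ordLeq"
    by (simp add: ordIso_iff_ordLeq)
  then obtain g where g: "inj_on g (L \<times> (UNIV::bool set))" "g ` (L \<times> UNIV) \<subseteq> L"
    using card_of_ordLeq[of "L \<times> (UNIV::bool set)" L] by auto
  define F where "F x = (\<lambda>l. g (l, l \<in> f x)) ` L" for x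
  have FL: "F x \<subseteq> L" for x using g(2) by (auto simp: F_def)
  have Fsep: "\<exists>\<xi>. \<xi> \<in> F x \<and> \<xi> \<notin> F y" if "x \<in> M" "y \<in> M" "x \<noteq> y" for x y
  proof -
    have "f x \<noteq> f y" using f(1) that by (auto simp: inj_on_def)
    moreover have "f x \<subseteq> L" "f y \<subseteq> L" using f(2) that by auto
    ultimately obtain l where l: "l \<in> L" "(l \<in> f x) \<noteq> (l \<in> f y)" by blast
    have "g (l, l \<in> f x) \<notin> F y"
    proof
      assume "g (l, l \<in> f x) \<in> F y"
      then obtain l' where "l' \<in> L" "g (l', l' \<in> f y) = g (l, l \<in> f x)" by (auto simp: F_def)
      hence "(l', l' \<in> f y) = (l, l \<in> f x)" using g(1) l(1) by (auto simp: inj_on_def)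
      thus False using l by auto
    qed
    moreover have "g (l, l \<in> f x) \<in> F x" unfolding F_def using l(1) by (rule imageI)
    ultimately show ?thesis by blast
  qed
  define r where "r = card_of M"
  have rwo: "Well_order r" and rF: "Field r = M" and rC: "Card_order r"
    unfolding r_def by (rule card_of_Well_order, rule Field_card_of, rule card_of_Card_order)
  have rtot: "(x, y) \<in> r \<or> (y, x) \<in> r" if "x \<in> M" "y \<in> M" "x \<noteq> y" for x y
    using rwo rF that unfolding well_order_on_def linear_order_on_def total_on_def by blast
  define Q where "Q e \<xi> = (\<exists>x y. e = {x, y} \<and> x \<noteq> y \<and> (x, y) \<in> r \<and> \<xi> \<in> F x \<and> \<xi> \<notin> F y)" for e \<xi>
  define c where "c e = (SOME \<xi>. Q e \<xi>)" for e
  have cQ: "Q e (c e)" if "e \<in> two_subsets M" for e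
  proof -
    from that obtain x y where e: "e = {x, y}" "x \<noteq> y" "x \<in> M" "y \<in> M"
      by (auto simp: two_subsets_def card_2_iff)
    have "\<exists>\<xi>. Q e \<xi>"
    proof (cases "(x, y) \<in> r")
      case True
      then obtain \<xi> where "\<xi> \<in> F x \<and> \<xi> \<notin> F y" using Fsep e by blast
      thus ?thesis using True e unfolding Q_def by blast
    next
      case False
      hence "(y, x) \<in> r" using rtot e by blast
      moreover obtain \<xi> where "\<xi> \<in> F y \<and> \<xi> \<notin> F x" using Fsep e by metis
      ultimately show ?thesis using e unfolding Q_def by (metis insert_commute)
    qed
    thus ?thesis unfolding c_def by (rule someI_ex)
  qed
  have cL: "\<forall>e\<in>two_subsets M. c e \<in> L"
    using cQ FL unfolding Q_def by blast
  from H cL obtain \<xi> X where X: "\<xi> \<in> L" "X \<subseteq> M" "(card_of X, card_of M) \<in> ordIso"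
    and hc: "highly_connected X {e \<in> two_subsets X. c e = \<xi>}"
    unfolding hc_arrow_def by blast
  have Xinf: "infinite X" using card_of_ordIso_finite[OF X(3)] assms(2) by simp
  define E where "E = {e \<in> two_subsets X. c e = \<xi>}"
  have edgeQ: "Q {u, v} \<xi>" if "{u, v} \<in> E" for u v
  proof -
    have "{u, v} \<in> two_subsets M" using that X(2) by (auto simp: E_def two_subsets_def)
    thus ?thesis using cQ that by (auto simp: E_def)
  qed
  obtain x0 y0 where xy0: "x0 \<in> X" "y0 \<in> X" "x0 \<noteq> y0"
    using Xinf by (rule two_elems)
  have "(card_of ({}::'a set), card_of X) \<in> ordLess" by (rule fin_less_inf[OF _ Xinf]) simp
  hence "graph_connected (X - {}) {e \<in> E. e \<subseteq> X - {}}" using hc unfolding highly_connected_def E_def by blast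
  hence "graph_connected X {e \<in> E. e \<subseteq> X}" by simp
  hence "(\<lambda>u v. u \<in> X \<and> v \<in> X \<and> {u, v} \<in> {e \<in> E. e \<subseteq> X})\<^sup>*\<^sup>* x0 y0"
    using xy0 unfolding graph_connected_def by blast
  then obtain z where "{x0, z} \<in> E"
    by (rule converse_rtranclpE) (use xy0 in auto)
  have x0zX: "{x0, z} \<subseteq> X" using \<open>{x0, z} \<in> E\<close> by (auto simp: E_def two_subsets_def)
  from edgeQ[OF \<open>{x0, z} \<in> E\<close>] obtain a1 b where "{x0, z} = {a1, b}" "\<xi> \<notin> F b"
    unfolding Q_def by blast
  hence b: "b \<in> X" "\<xi> \<notin> F b" using x0zX by blast+
  define D where "D = X \<inter> underS r b"
  have "(card_of D, card_of (underS r b)) \<in> ordLeq" unfolding D_def by (rule card_of_mono1) blast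
  moreover have "(card_of (underS r b), r) \<in> ordLess"
    using card_of_underS[OF rC, of b] b X(2) rF by auto
  ultimately have "(card_of D, r) \<in> ordLess" by (rule ordLeq_ordLess_trans)
  hence Dless: "(card_of D, card_of X) \<in> ordLess"
    using ordLess_ordIso_trans[OF _ ordIso_symmetric[OF X(3)]] r_def by simp
  have "infinite (X - D)"
  proof
    assume "finite (X - D)"
    hence "(card_of (X - D), card_of X) \<in> ordLess" by (rule fin_less_inf[OF _ Xinf])
    hence "(card_of (D \<union> (X - D)), card_of X) \<in> ordLess"
      using card_of_Un_ordLess_infinite[OF Xinf Dless] by blast
    moreover have "D \<union> (X - D) = X" unfolding D_def by blast
    ultimately show False using ordLess_irreflexive[of "card_of X"] by auto
  qed
  moreover have bXD: "b \<in> X - D" using b unfolding D_def underS_def by auto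
  ultimately obtain y where y: "y \<in> X - D" "y \<noteq> b"
    using two_elems[of "X - D"] by (metis Diff_iff)
  have "D \<subseteq> X" unfolding D_def by blast
  hence "graph_connected (X - D) {e \<in> E. e \<subseteq> X - D}"
    using hc Dless unfolding highly_connected_def E_def by blast
  hence "(\<lambda>u v. u \<in> X - D \<and> v \<in> X - D \<and> {u, v} \<in> {e \<in> E. e \<subseteq> X - D})\<^sup>*\<^sup>* b y"
    using y bXD unfolding graph_connected_def by blast
  then obtain u where u: "u \<in> X - D" "{b, u} \<in> E"
    by (rule converse_rtranclpE) (use y in auto)
  from edgeQ[OF u(2)] obtain a' b' where q: "{b, u} = {a', b'}" "a' \<noteq> b'" "(a', b') \<in> r" "\<xi> \<in> F a'" "\<xi> \<notin> F b'"
    unfolding Q_def by blast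
  have "b \<noteq> a'" using q(4) b(2) by blast
  hence "b = b'" "u = a'" using q(1) by (auto simp: doubleton_eq_iff)
  hence "u \<in> underS r b" using q unfolding underS_def by auto
  thus False using u(1) unfolding D_def by blast
qed

end
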